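(* Let $S$ be a finite set, $G$ a finite group, $f:S\to G$ a function, and let $\{\rho\}$, $P_\rho$, $c_\rho$, $\phi=\sum_\rho c_\rho\rho^\dagger(P_\rho)$, $u_S$ and $U_f$ be as follows: $\{\rho\}$ is a complete set of representatives of the irreducible unitary representations $\rho:G\to U(V_\rho)$; each $P_\rho$ is an orthogonal projector on $V_\rho$; all $c_\rho$ are nonzero complex numbers; $u_S=|S|^{-1/2}\sum_{s}|s\rangle$; $U_f(|s\rangle\otimes|g\rangle)=|s\rangle\otimes|f(s)g\rangle$. Let $D=\mathrm{id}_{\mathbb{C}[S]}-\frac{2}{|S|}\sum_{s,t\in S}|s\rangle\langle t|$ be the diffusion operator and $\psi=(D\otimes\mathrm{id})U_f(u_S\otimes\phi)$. Then for $s\in S$, $(\langle s|\otimes\mathrm{id})\psi=0$ (so $s$ has probability zero of being the outcome of measuring the first factor in the basis $\{|s\rangle\}$) if and only if for every $\rho$, \[ \rho(f(s))\,P_\rho=\frac{2}{|S|}\sum_{t\in S}\rho(f(t))\,P_\rho . \]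
   Context: For a finite set $X$, $\mathbb{C}[X]$ is the Hilbert space with orthonormal basis $\{|x\rangle\}$; $\mathbb{C}[G]$ is also the group algebra. Each $\rho$ is extended linearly to $\mathbb{C}[G]\to\mathrm{End}(V_\rho)$, $\mathrm{End}(V_\rho)$ has the Hilbert–Schmidt inner product, and $\rho^\dagger(M)=\sum_{h\in G}\mathrm{Tr}(\rho(h)^\dagger M)|h\rangle$. *)

theory Defs
  imports "Jordan_Normal_Form.Schur_Decomposition" "HOL-Algebra.Group"
begin

(* Matrices are Jordan_Normal_Form complex matrices; V_rho = C^(d rho). *)

definition mtrace :: "complex mat \<Rightarrow> complex" where
  "mtrace A = (\<Sum>i<dim_row A. A $$ (i, i))"

definition msum :: "nat \<Rightarrow> 'a set \<Rightarrow> ('a \<Rightarrow> complex mat) \<Rightarrow> complex mat" where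
  "msum n A F = mat n n (\<lambda>(i, j). \<Sum>a\<in>A. F a $$ (i, j))"

definition unitary_mat :: "nat \<Rightarrow> complex mat \<Rightarrow> bool" where
  "unitary_mat n U \<longleftrightarrow> U \<in> carrier_mat n n \<and> U * mat_adjoint U = 1\<^sub>m n \<and> mat_adjoint U * U = 1\<^sub>m n"

definition unitary_rep :: "('g, 'b) monoid_scheme \<Rightarrow> nat \<Rightarrow> ('g \<Rightarrow> complex mat) \<Rightarrow> bool" where
  "unitary_rep G n \<rho> \<longleftrightarrow>
     (\<forall>g\<in>carrier G. unitary_mat n (\<rho> g)) \<and>
     (\<forall>g\<in>carrier G. \<forall>h\<in>carrier G. \<rho> (g \<otimes>\<^bsub>G\<^esub> h) = \<rho> g * \<rho> h)"

definition invariant_subspace :: "('g, 'b) monoid_scheme \<Rightarrow> nat \<Rightarrow> ('g \<Rightarrow> complex mat) \<Rightarrow> complex vec set \<Rightarrow> bool" where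
  "invariant_subspace G n \<rho> W \<longleftrightarrow>
     W \<subseteq> carrier_vec n \<and> 0\<^sub>v n \<in> W \<and>
     (\<forall>v\<in>W. \<forall>w\<in>W. v + w \<in> W) \<and>
     (\<forall>a. \<forall>v\<in>W. a \<cdot>\<^sub>v v \<in> W) \<and>
     (\<forall>g\<in>carrier G. \<forall>v\<in>W. \<rho> g *\<^sub>v v \<in> W)"

definition irreducible_unitary_rep :: "('g, 'b) monoid_scheme \<Rightarrow> nat \<Rightarrow> ('g \<Rightarrow> complex mat) \<Rightarrow> bool" where
  "irreducible_unitary_rep G n \<rho> \<longleftrightarrow>
     unitary_rep G n \<rho> \<and> n > 0 \<and>
     (\<forall>W. invariant_subspace G n \<rho> W \<longrightarrow> W = {0\<^sub>v n} \<or> W = carrier_vec n)"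

definition equivalent_reps :: "('g, 'b) monoid_scheme \<Rightarrow> nat \<Rightarrow> ('g \<Rightarrow> complex mat) \<Rightarrow> nat \<Rightarrow> ('g \<Rightarrow> complex mat) \<Rightarrow> bool" where
  "equivalent_reps G n \<rho> m \<sigma> \<longleftrightarrow> n = m \<and>
     (\<exists>A\<in>carrier_mat n n. invertible_mat A \<and> (\<forall>g\<in>carrier G. A * \<rho> g = \<sigma> g * A))"

definition complete_irreps :: "('g, 'b) monoid_scheme \<Rightarrow> 'i set \<Rightarrow> ('i \<Rightarrow> nat) \<Rightarrow> ('i \<Rightarrow> 'g \<Rightarrow> complex mat) \<Rightarrow> bool" where
  "complete_irreps G R d \<rho> \<longleftrightarrow>
     (\<forall>i\<in>R. irreducible_unitary_rep G (d i) (\<rho> i)) \<and>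
     (\<forall>i\<in>R. \<forall>j\<in>R. equivalent_reps G (d i) (\<rho> i) (d j) (\<rho> j) \<longrightarrow> i = j) \<and>
     (\<forall>n \<sigma>. irreducible_unitary_rep G n \<sigma> \<longrightarrow> (\<exists>i\<in>R. equivalent_reps G n \<sigma> (d i) (\<rho> i)))"

definition orth_projector :: "nat \<Rightarrow> complex mat \<Rightarrow> bool" where
  "orth_projector n P \<longleftrightarrow> P \<in> carrier_mat n n \<and> P * P = P \<and> mat_adjoint P = P"

(* Elements of C[G] are functions 'g \<Rightarrow> complex supported on carrier G;
   elements of C[S] \<otimes> C[G] are functions 's \<times> 'g \<Rightarrow> complex supported on S \<times> carrier G. *)

definition rep_dagger :: "('g, 'b) monoid_scheme \<Rightarrow> ('g \<Rightarrow> complex mat) \<Rightarrow> complex mat \<Rightarrow> 'g \<Rightarrow> complex" where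
  "rep_dagger G \<rho> M = (\<lambda>h. if h \<in> carrier G then mtrace (mat_adjoint (\<rho> h) * M) else 0)"

definition uS_tensor :: "'s set \<Rightarrow> ('g \<Rightarrow> complex) \<Rightarrow> 's \<times> 'g \<Rightarrow> complex" where
  "uS_tensor S x = (\<lambda>(s, g). if s \<in> S then complex_of_real (1 / sqrt (real (card S))) * x g else 0)"

(* U_f (|s> \<otimes> |g>) = |s> \<otimes> |f(s) g> *)
definition U_f :: "('g, 'b) monoid_scheme \<Rightarrow> 's set \<Rightarrow> ('s \<Rightarrow> 'g) \<Rightarrow> ('s \<times> 'g \<Rightarrow> complex) \<Rightarrow> 's \<times> 'g \<Rightarrow> complex" where
  "U_f G S f x = (\<lambda>(s, h). if s \<in> S \<and> h \<in> carrier G then x (s, inv\<^bsub>G\<^esub> (f s) \<otimes>\<^bsub>G\<^esub> h) else 0)"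

definition diffusion_tensor_id :: "'s set \<Rightarrow> ('s \<times> 'g \<Rightarrow> complex) \<Rightarrow> 's \<times> 'g \<Rightarrow> complex" where
  "diffusion_tensor_id S x = (\<lambda>(s, g). if s \<in> S then x (s, g) - (2 / of_nat (card S)) * (\<Sum>t\<in>S. x (t, g)) else 0)"

end

theory Submission
  imports Defs "Jordan_Normal_Form.Spectral_Radius"
begin

lemma adj_carrier[simp]: "A \<in> carrier_mat m n \<Longrightarrow> mat_adjoint A \<in> carrier_mat n m"
  unfolding mat_adjoint_def by (auto simp: mat_of_rows_def)

lemma adj_dims[simp]: "dim_row (mat_adjoint A) = dim_col A" "dim_col (mat_adjoint A) = dim_row A"
  unfolding mat_adjoint_def by (auto simp: mat_of_rows_def)

lemma adj_index[simp]: "i < dim_col A \<Longrightarrow> j < dim_row A \<Longrightarrow> mat_adjoint A $$ (i,j) = cnj (A $$ (j,i))"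
  unfolding mat_adjoint_def by (auto simp: mat_of_rows_def)

lemma adj_mult: "A \<in> carrier_mat m n \<Longrightarrow> B \<in> carrier_mat n k \<Longrightarrow>
   mat_adjoint (A * B) = mat_adjoint B * (mat_adjoint A :: complex mat)"
proof -
  assume a: "A \<in> carrier_mat m n" "B \<in> carrier_mat n k"
  then have d: "dim_row A = m" "dim_col A = n" "dim_row B = n" "dim_col B = k" by auto
  show ?thesis by (rule eq_matI) (auto simp: d scalar_prod_def mult.commute intro!: sum.cong)
qed

lemma adj_adj: "mat_adjoint (mat_adjoint (A::complex mat)) = A"
  by (rule eq_matI) auto

definition msum2 :: "nat \<Rightarrow> nat \<Rightarrow> 'a set \<Rightarrow> ('a \<Rightarrow> complex mat) \<Rightarrow> complex mat" where
  "msum2 m n A F = mat m n (\<lambda>(i, j). \<Sum>a\<in>A. F a $$ (i, j))"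

lemma msum_eq: "msum n A F = msum2 n n A F" unfolding msum_def msum2_def by simp

lemma msum2_carrier[simp]: "msum2 m n A F \<in> carrier_mat m n" unfolding msum2_def by simp
lemma msum2_index[simp]: "i < m \<Longrightarrow> j < n \<Longrightarrow> msum2 m n A F $$ (i,j) = (\<Sum>a\<in>A. F a $$ (i, j))"
  unfolding msum2_def by simp
lemma msum2_dims[simp]: "dim_row (msum2 m n A F) = m" "dim_col (msum2 m n A F) = n"
  unfolding msum2_def by simp_all

lemma msum2_left: assumes "B \<in> carrier_mat k m" "\<And>a. a \<in> A \<Longrightarrow> F a \<in> carrier_mat m n"
  shows "B * msum2 m n A F = msum2 k n A (\<lambda>a. B * F a)"
proof (rule eq_matI)
  fix i j assume ij: "i < dim_row (msum2 k n A (\<lambda>a. B * F a))" "j < dim_col (msum2 k n A (\<lambda>a. B * F a))"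
  have "(B * msum2 m n A F) $$ (i,j) = (\<Sum>x<m. B $$ (i,x) * (\<Sum>a\<in>A. F a $$ (x, j)))"
    using ij assms(1) by (auto simp: scalar_prod_def intro!: sum.cong)
  also have "\<dots> = (\<Sum>a\<in>A. \<Sum>x<m. B $$ (i,x) * F a $$ (x, j))"
    by (simp add: sum_distrib_left sum.swap[of _ A])
  also have "\<dots> = msum2 k n A (\<lambda>a. B * F a) $$ (i,j)"
    using ij assms(1) by (auto simp: scalar_prod_def intro!: sum.cong dest!: assms(2))
  finally show "(B * msum2 m n A F) $$ (i,j) = msum2 k n A (\<lambda>a. B * F a) $$ (i,j)" .
qed (use assms in auto)

lemma msum2_right: assumes "B \<in> carrier_mat n k" "\<And>a. a \<in> A \<Longrightarrow> F a \<in> carrier_mat m n"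
  shows "msum2 m n A F * B = msum2 m k A (\<lambda>a. F a * B)"
proof (rule eq_matI)
  fix i j assume ij: "i < dim_row (msum2 m k A (\<lambda>a. F a * B))" "j < dim_col (msum2 m k A (\<lambda>a. F a * B))"
  have "(msum2 m n A F * B) $$ (i,j) = (\<Sum>x<n. (\<Sum>a\<in>A. F a $$ (i, x)) * B $$ (x,j))"
    using ij assms(1) by (auto simp: scalar_prod_def intro!: sum.cong)
  also have "\<dots> = (\<Sum>a\<in>A. \<Sum>x<n. F a $$ (i, x) * B $$ (x,j))"
    by (simp add: sum_distrib_right sum.swap[of _ A])
  also have "\<dots> = msum2 m k A (\<lambda>a. F a * B) $$ (i,j)"
    using ij assms(1) by (auto simp: scalar_prod_def intro!: sum.cong dest!: assms(2))
  finally show "(msum2 m n A F * B) $$ (i,j) = msum2 m k A (\<lambda>a. F a * B) $$ (i,j)" .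
qed (use assms in auto)

lemma mtrace_msum2: "(\<And>a. a \<in> A \<Longrightarrow> F a \<in> carrier_mat n n) \<Longrightarrow> mtrace (msum2 n n A F) = (\<Sum>a\<in>A. mtrace (F a))"
  unfolding mtrace_def by (auto simp add: sum.swap[of _ A] intro!: sum.cong)

lemma mtrace_comm: assumes "A \<in> carrier_mat m n" "B \<in> carrier_mat n m"
  shows "mtrace (A * B) = mtrace (B * A)"
proof -
  have "mtrace (A * B) = (\<Sum>i<m. \<Sum>k<n. A $$ (i,k) * B $$ (k,i))"
    unfolding mtrace_def using assms by (auto simp: scalar_prod_def intro!: sum.cong)
  also have "\<dots> = (\<Sum>k<n. \<Sum>i<m. B $$ (k,i) * A $$ (i,k))"
    by (subst sum.swap) (simp add: mult.commute)
  also have "\<dots> = mtrace (B * A)"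
    unfolding mtrace_def using assms by (auto simp: scalar_prod_def intro!: sum.cong)
  finally show ?thesis .
qed

lemma mtrace_minus: "A \<in> carrier_mat n n \<Longrightarrow> B \<in> carrier_mat n n \<Longrightarrow> mtrace (A - B) = mtrace A - mtrace B"
  unfolding mtrace_def by (auto simp: sum_subtractf)

lemma mtrace_smult: "A \<in> carrier_mat n n \<Longrightarrow> mtrace (c \<cdot>\<^sub>m A) = c * mtrace A"
  unfolding mtrace_def by (auto simp: sum_distrib_left)

lemma mtrace_one: "mtrace (1\<^sub>m n) = of_nat n"
  unfolding mtrace_def by simp

lemma mat_unit_vec_index: assumes "(A::complex mat) \<in> carrier_mat m n" "i < m" "j < n"
  shows "(A *\<^sub>v unit_vec n j) $ i = A $$ (i,j)"
  using assms by (auto simp: scalar_prod_def unit_vec_def if_distrib[of "\<lambda>x. _ * x"] sum.delta cong: if_cong)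

context
  fixes G :: "('g, 'b) monoid_scheme" (structure) and n :: nat and \<rho> :: "'g \<Rightarrow> complex mat"
  assumes grp: "group G" and rep: "unitary_rep G n \<rho>"
begin

lemma rep_carrier: "g \<in> carrier G \<Longrightarrow> \<rho> g \<in> carrier_mat n n"
  using rep unfolding unitary_rep_def unitary_mat_def by auto

lemma rep_adj_l: "g \<in> carrier G \<Longrightarrow> mat_adjoint (\<rho> g) * \<rho> g = 1\<^sub>m n"
  using rep unfolding unitary_rep_def unitary_mat_def by auto

lemma rep_adj_r: "g \<in> carrier G \<Longrightarrow> \<rho> g * mat_adjoint (\<rho> g) = 1\<^sub>m n"
  using rep unfolding unitary_rep_def unitary_mat_def by auto

lemma rep_mult: "g \<in> carrier G \<Longrightarrow> h \<in> carrier G \<Longrightarrow> \<rho> (g \<otimes>\<^bsub>G\<^esub> h) = \<rho> g * \<rho> h"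
  using rep unfolding unitary_rep_def by auto

lemma rep_one: "\<rho> \<one>\<^bsub>G\<^esub> = 1\<^sub>m n"
proof -
  interpret group G by (rule grp)
  have c: "\<rho> \<one> \<in> carrier_mat n n" by (rule rep_carrier) simp
  have "\<rho> \<one> = \<rho> \<one> * \<rho> \<one>" using rep_mult[of \<one> \<one>] by simp
  then have "mat_adjoint (\<rho> \<one>) * \<rho> \<one> = mat_adjoint (\<rho> \<one>) * (\<rho> \<one> * \<rho> \<one>)" by simp
  also have "\<dots> = (mat_adjoint (\<rho> \<one>) * \<rho> \<one>) * \<rho> \<one>"
    using c by (simp add: assoc_mult_mat[of _ n n _ n _ n])
  finally show ?thesis using rep_adj_l[of \<one>] c by simp
qed

lemma rep_inv: "g \<in> carrier G \<Longrightarrow> \<rho> (inv\<^bsub>G\<^esub> g) = mat_adjoint (\<rho> g)"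
proof -
  interpret group G by (rule grp)
  assume g: "g \<in> carrier G"
  have c: "\<rho> g \<in> carrier_mat n n" "\<rho> (inv g) \<in> carrier_mat n n" using g by (auto intro: rep_carrier)
  have "\<rho> g * \<rho> (inv g) = 1\<^sub>m n" using rep_mult[of g "inv g"] g rep_one by simp
  then have "mat_adjoint (\<rho> g) * (\<rho> g * \<rho> (inv g)) = mat_adjoint (\<rho> g)" using c by simp
  moreover have "mat_adjoint (\<rho> g) * (\<rho> g * \<rho> (inv g)) = (mat_adjoint (\<rho> g) * \<rho> g) * \<rho> (inv g)"
    using c by (simp add: assoc_mult_mat[of _ n n _ n _ n])
  ultimately show ?thesis using rep_adj_l[OF g] c by simp
qed

lemma rep_adj_inv_mult: "a \<in> carrier G \<Longrightarrow> g \<in> carrier G \<Longrightarrow>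
  mat_adjoint (\<rho> (inv\<^bsub>G\<^esub> a \<otimes>\<^bsub>G\<^esub> g)) = mat_adjoint (\<rho> g) * \<rho> a"
proof -
  interpret group G by (rule grp)
  assume a: "a \<in> carrier G" and g: "g \<in> carrier G"
  have "\<rho> (inv a \<otimes> g) = mat_adjoint (\<rho> a) * \<rho> g" using rep_mult[of "inv a" g] a g rep_inv by simp
  then show ?thesis using a g rep_carrier[OF a] rep_carrier[OF g]
    by (simp add: adj_mult[of _ n n _ n] adj_adj)
qed

end

lemma schur_scalar:
  assumes grp: "group G" and irr: "irreducible_unitary_rep G n \<rho>"
    and A: "A \<in> carrier_mat n n" and comm: "\<forall>h\<in>carrier G. \<rho> h * A = A * \<rho> h"
  shows "\<exists>l. A = l \<cdot>\<^sub>m 1\<^sub>m n"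
proof -
  have rep: "unitary_rep G n \<rho>" and n: "n > 0"
    and irrW: "\<And>W. invariant_subspace G n \<rho> W \<Longrightarrow> W = {0\<^sub>v n} \<or> W = carrier_vec n"
    using irr unfolding irreducible_unitary_rep_def by auto
  from spectrum_non_empty[OF A n] obtain l where "eigenvalue A l" unfolding spectrum_def by auto
  then obtain v where ev: "eigenvector A v l" unfolding eigenvalue_def by auto
  then have v: "v \<in> carrier_vec n" "v \<noteq> 0\<^sub>v n" "A *\<^sub>v v = l \<cdot>\<^sub>v v"
    unfolding eigenvector_def using A by auto
  define W where "W = {w \<in> carrier_vec n. A *\<^sub>v w = l \<cdot>\<^sub>v w}"
  have "invariant_subspace G n \<rho> W"
    unfolding invariant_subspace_def
  proof (intro conjI ballI allI)
    show "W \<subseteq> carrier_vec n" unfolding W_def by auto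
    show "0\<^sub>v n \<in> W" unfolding W_def using A by auto
    fix x y assume x: "x \<in> W" and y: "y \<in> W"
    then show "x + y \<in> W" unfolding W_def using A
      by (auto simp: mult_add_distrib_mat_vec smult_add_distrib_vec)
  next
    fix a x assume x: "x \<in> W"
    then show "a \<cdot>\<^sub>v x \<in> W" unfolding W_def using A
      by (auto simp: mult_mat_vec smult_smult_assoc mult.commute)
  next
    fix h x assume h: "h \<in> carrier G" and x: "x \<in> W"
    have rh: "\<rho> h \<in> carrier_mat n n" using rep_carrier[OF grp rep h] .
    have xc: "x \<in> carrier_vec n" and Ax: "A *\<^sub>v x = l \<cdot>\<^sub>v x" using x unfolding W_def by auto
    have "A *\<^sub>v (\<rho> h *\<^sub>v x) = (A * \<rho> h) *\<^sub>v x" using A rh xc by simp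
    also have "\<dots> = (\<rho> h * A) *\<^sub>v x" using comm h by simp
    also have "\<dots> = \<rho> h *\<^sub>v (l \<cdot>\<^sub>v x)" using A rh xc Ax by simp
    also have "\<dots> = l \<cdot>\<^sub>v (\<rho> h *\<^sub>v x)" using rh xc by (simp add: mult_mat_vec)
    finally show "\<rho> h *\<^sub>v x \<in> W" unfolding W_def using rh xc by auto
  qed
  then have "W = {0\<^sub>v n} \<or> W = carrier_vec n" by (rule irrW)
  moreover have "v \<in> W" using v unfolding W_def by auto
  ultimately have W: "W = carrier_vec n" using v by auto
  have "A = l \<cdot>\<^sub>m 1\<^sub>m n"
  proof (rule eq_matI)
    fix i j assume ij: "i < dim_row (l \<cdot>\<^sub>m 1\<^sub>m n)" "j < dim_col (l \<cdot>\<^sub>m 1\<^sub>m n)"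
    then have ij': "i < n" "j < n" by auto
    have "unit_vec n j \<in> W" using W by auto
    then have "A *\<^sub>v unit_vec n j = l \<cdot>\<^sub>v unit_vec n j" unfolding W_def by auto
    then have "(A *\<^sub>v unit_vec n j) $ i = (l \<cdot>\<^sub>v unit_vec n j) $ i" by simp
    then show "A $$ (i, j) = (l \<cdot>\<^sub>m 1\<^sub>m n) $$ (i, j)"
      using mat_unit_vec_index[OF A ij'] ij' by auto
  qed (use A in auto)
  then show ?thesis by blast
qed


lemma adjT_T_zero: assumes T: "(T::complex mat) \<in> carrier_mat m n" and z: "mat_adjoint T * T = 0\<^sub>m n n"
  shows "T = 0\<^sub>m m n"
proof (rule eq_matI)
  fix l k assume lk: "l < dim_row (0\<^sub>m m n :: complex mat)" "k < dim_col (0\<^sub>m m n :: complex mat)"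
  then have l: "l < m" and k: "k < n" by auto
  have "(mat_adjoint T * T) $$ (k,k) = (\<Sum>x<m. cnj (T $$ (x,k)) * T $$ (x,k))"
    using T k by (auto simp: scalar_prod_def intro!: sum.cong)
  also have "\<dots> = of_real (\<Sum>x<m. (cmod (T $$ (x,k)))^2)"
    unfolding of_real_sum complex_norm_square by (simp add: mult.commute)
  finally have X: "(mat_adjoint T * T) $$ (k,k) = of_real (\<Sum>x<m. (cmod (T $$ (x,k)))^2)" .
  have Z: "(mat_adjoint T * T) $$ (k,k) = 0" using z k by simp
  have "(\<Sum>x<m. (cmod (T $$ (x,k)))^2) = 0" using X Z of_real_eq_0_iff by metis
  then have "\<forall>x\<in>{..<m}. (cmod (T $$ (x,k)))^2 = 0"
    by (subst sum_nonneg_eq_0_iff[symmetric]) auto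
  then show "T $$ (l, k) = 0\<^sub>m m n $$ (l, k)" using l k by auto
qed (use T in auto)

lemma inv_smult_cancel[simp]: "(c::complex) \<noteq> 0 \<Longrightarrow> (1 / c) \<cdot>\<^sub>m (c \<cdot>\<^sub>m A) = A"
  by (rule eq_matI) auto

lemma schur_zero:
  assumes grp: "group G" and irr1: "irreducible_unitary_rep G n1 \<rho>1"
    and irr2: "irreducible_unitary_rep G n2 \<rho>2"
    and noneq: "\<not> equivalent_reps G n1 \<rho>1 n2 \<rho>2"
    and T: "T \<in> carrier_mat n2 n1"
    and intw: "\<forall>h\<in>carrier G. \<rho>2 h * T = T * \<rho>1 h"
  shows "T = 0\<^sub>m n2 n1"
proof (rule ccontr)
  assume Tnz: "T \<noteq> 0\<^sub>m n2 n1"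
  have rep1: "unitary_rep G n1 \<rho>1" and rep2: "unitary_rep G n2 \<rho>2"
    using irr1 irr2 unfolding irreducible_unitary_rep_def by auto
  note c1 = rep_carrier[OF grp rep1] and c2 = rep_carrier[OF grp rep2]
  have Ta: "mat_adjoint T \<in> carrier_mat n1 n2" using T by simp
  have adjint: "mat_adjoint T * \<rho>2 h = \<rho>1 h * mat_adjoint T" if h: "h \<in> carrier G" for h
  proof -
    have hi: "inv\<^bsub>G\<^esub> h \<in> carrier G" using grp h by simp
    have "\<rho>2 (inv\<^bsub>G\<^esub> h) * T = T * \<rho>1 (inv\<^bsub>G\<^esub> h)" using intw hi by auto
    then have "mat_adjoint (\<rho>2 h) * T = T * mat_adjoint (\<rho>1 h)"
      using rep_inv[OF grp rep1 h] rep_inv[OF grp rep2 h] by simp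
    then have "mat_adjoint (mat_adjoint (\<rho>2 h) * T) = mat_adjoint (T * mat_adjoint (\<rho>1 h))" by simp
    then show ?thesis using c1[OF h] c2[OF h] T
      by (simp add: adj_mult[of _ n2 n1 _ n1] adj_mult[of _ n2 n2 _ n1] adj_adj)
  qed
  have "\<exists>a. mat_adjoint T * T = a \<cdot>\<^sub>m 1\<^sub>m n1"
  proof (rule schur_scalar[OF grp irr1])
    show "mat_adjoint T * T \<in> carrier_mat n1 n1" using T Ta by (meson mult_carrier_mat)
    show "\<forall>h\<in>carrier G. \<rho>1 h * (mat_adjoint T * T) = mat_adjoint T * T * \<rho>1 h"
    proof
      fix h assume h: "h \<in> carrier G"
      have "\<rho>1 h * (mat_adjoint T * T) = (\<rho>1 h * mat_adjoint T) * T"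
        using assoc_mult_mat[OF c1[OF h] Ta T] by simp
      also have "\<dots> = (mat_adjoint T * \<rho>2 h) * T" using adjint[OF h] by simp
      also have "\<dots> = mat_adjoint T * (\<rho>2 h * T)" using assoc_mult_mat[OF Ta c2[OF h] T] by simp
      also have "\<dots> = mat_adjoint T * (T * \<rho>1 h)" using intw h by simp
      also have "\<dots> = mat_adjoint T * T * \<rho>1 h" using assoc_mult_mat[OF Ta T c1[OF h]] by simp
      finally show "\<rho>1 h * (mat_adjoint T * T) = mat_adjoint T * T * \<rho>1 h" .
    qed
  qed
  then obtain a where a: "mat_adjoint T * T = a \<cdot>\<^sub>m 1\<^sub>m n1" by blast
  have "\<exists>b. T * mat_adjoint T = b \<cdot>\<^sub>m 1\<^sub>m n2"
  proof (rule schur_scalar[OF grp irr2])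
    show "T * mat_adjoint T \<in> carrier_mat n2 n2" using T Ta by (meson mult_carrier_mat)
    show "\<forall>h\<in>carrier G. \<rho>2 h * (T * mat_adjoint T) = T * mat_adjoint T * \<rho>2 h"
    proof
      fix h assume h: "h \<in> carrier G"
      have "\<rho>2 h * (T * mat_adjoint T) = (\<rho>2 h * T) * mat_adjoint T"
        using assoc_mult_mat[OF c2[OF h] T Ta] by simp
      also have "\<dots> = (T * \<rho>1 h) * mat_adjoint T" using intw h by simp
      also have "\<dots> = T * (\<rho>1 h * mat_adjoint T)" using assoc_mult_mat[OF T c1[OF h] Ta] by simp
      also have "\<dots> = T * (mat_adjoint T * \<rho>2 h)" using adjint[OF h] by simp
      also have "\<dots> = T * mat_adjoint T * \<rho>2 h" using assoc_mult_mat[OF T Ta c2[OF h]] by simp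
      finally show "\<rho>2 h * (T * mat_adjoint T) = T * mat_adjoint T * \<rho>2 h" .
    qed
  qed
  then obtain b where b: "T * mat_adjoint T = b \<cdot>\<^sub>m 1\<^sub>m n2" by blast
  have a0: "a \<noteq> 0"
  proof
    assume "a = 0"
    then have "mat_adjoint T * T = 0\<^sub>m n1 n1" using a by auto
    then show False using adjT_T_zero[OF T] Tnz by simp
  qed
  obtain i j where ij: "i < n2" "j < n1" "T $$ (i,j) \<noteq> 0"
  proof -
    have "\<exists>i j. i < n2 \<and> j < n1 \<and> T $$ (i,j) \<noteq> 0"
    proof (rule ccontr)
      assume "\<not> ?thesis"
      then have "T = 0\<^sub>m n2 n1" using T by (intro eq_matI) auto
      then show False using Tnz by simp
    qed
    then show ?thesis using that by blast
  qed
  have "T * (mat_adjoint T * T) = (T * mat_adjoint T) * T" using assoc_mult_mat[OF T Ta T] by simp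
  then have "T * (a \<cdot>\<^sub>m 1\<^sub>m n1) = (b \<cdot>\<^sub>m 1\<^sub>m n2) * T" using a b by simp
  then have "a \<cdot>\<^sub>m T = b \<cdot>\<^sub>m T" using T
    by (simp add: mult_smult_distrib[of _ n2 n1 _ n1] mult_smult_assoc_mat[of _ n2 n2 _ n1])
  then have "(a \<cdot>\<^sub>m T) $$ (i,j) = (b \<cdot>\<^sub>m T) $$ (i,j)" by simp
  then have ab: "a = b" using ij T by auto
  have "mtrace (mat_adjoint T * T) = mtrace (T * mat_adjoint T)"
    by (rule mtrace_comm[OF Ta T])
  then have "a * of_nat n1 = a * of_nat n2" using a b ab
    by (simp add: mtrace_smult[of _ n1] mtrace_smult[of _ n2] mtrace_one)
  then have n12: "n1 = n2" using a0 by simp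
  have "equivalent_reps G n1 \<rho>1 n2 \<rho>2"
    unfolding equivalent_reps_def
  proof (intro conjI bexI ballI)
    show "n1 = n2" by (rule n12)
    show "T \<in> carrier_mat n1 n1" using T n12 by simp
    show "\<And>g. g \<in> carrier G \<Longrightarrow> T * \<rho>1 g = \<rho>2 g * T" using intw by simp
    define B where "B = (1 / a) \<cdot>\<^sub>m mat_adjoint T"
    have "T * B = 1\<^sub>m n2" unfolding B_def using T Ta b ab a0
      by (simp add: mult_smult_distrib[of _ n2 n1 _ n2])
    moreover have "B * T = 1\<^sub>m n1" unfolding B_def using T Ta a a0
      by (simp add: mult_smult_assoc_mat[of _ n1 n2 _ n1])
    ultimately show "invertible_mat T"
      unfolding invertible_mat_def inverts_mat_def square_mat.simps using T n12 B_def
      by (auto intro!: exI[of _ B])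
  qed
  then show False using noneq by simp
qed


lemma msum2_reindex:
  assumes grp: "group G" and h: "h \<in> carrier G"
  shows "msum2 m n (carrier G) (\<lambda>g. H (h \<otimes>\<^bsub>G\<^esub> g)) = msum2 m n (carrier G) H"
proof -
  interpret group G by (rule grp)
  have "(\<Sum>g\<in>carrier G. H (h \<otimes>\<^bsub>G\<^esub> g) $$ (i,j)) = (\<Sum>g\<in>carrier G. H g $$ (i,j))" for i j
    by (rule sum.reindex_bij_witness[where i="\<lambda>g. inv\<^bsub>G\<^esub> h \<otimes>\<^bsub>G\<^esub> g" and j="\<lambda>g. h \<otimes>\<^bsub>G\<^esub> g"])
       (use h in \<open>auto simp: m_assoc[symmetric]\<close>)
  then show ?thesis unfolding msum2_def by simp
qed

definition Lm :: "('g, 'b) monoid_scheme \<Rightarrow> nat \<Rightarrow> nat \<Rightarrow> ('g \<Rightarrow> complex mat) \<Rightarrow> ('g \<Rightarrow> complex mat) \<Rightarrow> complex mat \<Rightarrow> complex mat" where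
  "Lm G n2 n1 \<rho>2 \<rho>1 X = msum2 n2 n1 (carrier G) (\<lambda>g. \<rho>2 g * X * mat_adjoint (\<rho>1 g))"

lemma Lm_intw:
  assumes grp: "group G" and rep1: "unitary_rep G n1 \<rho>1" and rep2: "unitary_rep G n2 \<rho>2"
    and X: "X \<in> carrier_mat n2 n1" and h: "h \<in> carrier G"
  shows "\<rho>2 h * Lm G n2 n1 \<rho>2 \<rho>1 X = Lm G n2 n1 \<rho>2 \<rho>1 X * \<rho>1 h"
proof -
  interpret group G by (rule grp)
  note c1 = rep_carrier[OF grp rep1] and c2 = rep_carrier[OF grp rep2]
  define F where "F = (\<lambda>g. \<rho>2 g * X * mat_adjoint (\<rho>1 g))"
  have Fc: "F g \<in> carrier_mat n2 n1" if "g \<in> carrier G" for g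
    unfolding F_def using c1[OF that] c2[OF that] X by (meson mult_carrier_mat adj_carrier)
  have pw: "\<rho>2 h * F g = F (h \<otimes>\<^bsub>G\<^esub> g) * \<rho>1 h" if g: "g \<in> carrier G" for g
  proof -
    have a: "\<rho>2 h \<in> carrier_mat n2 n2" and b: "\<rho>2 g \<in> carrier_mat n2 n2"
      and r: "\<rho>1 h \<in> carrier_mat n1 n1" and rg: "\<rho>1 g \<in> carrier_mat n1 n1"
      using c1 c2 g h by auto
    have P: "mat_adjoint (\<rho>1 g) \<in> carrier_mat n1 n1" and Q: "mat_adjoint (\<rho>1 h) \<in> carrier_mat n1 n1"
      using rg r by auto
    have ab: "\<rho>2 h * \<rho>2 g \<in> carrier_mat n2 n2" using a b by (meson mult_carrier_mat)
    have Y: "\<rho>2 h * \<rho>2 g * X \<in> carrier_mat n2 n1" using ab X by (meson mult_carrier_mat)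
    have bX: "\<rho>2 g * X \<in> carrier_mat n2 n1" using b X by (meson mult_carrier_mat)
    have PQ: "mat_adjoint (\<rho>1 g) * mat_adjoint (\<rho>1 h) \<in> carrier_mat n1 n1" using P Q by (meson mult_carrier_mat)
    have "F (h \<otimes>\<^bsub>G\<^esub> g) * \<rho>1 h = (\<rho>2 h * \<rho>2 g * X) * (mat_adjoint (\<rho>1 g) * mat_adjoint (\<rho>1 h)) * \<rho>1 h"
      unfolding F_def using rep_mult[OF grp rep1 h g] rep_mult[OF grp rep2 h g] r rg
      by (simp add: adj_mult[of _ n1 n1 _ n1])
    also have "\<dots> = (\<rho>2 h * \<rho>2 g * X) * ((mat_adjoint (\<rho>1 g) * mat_adjoint (\<rho>1 h)) * \<rho>1 h)"
      using assoc_mult_mat[OF Y PQ r] .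
    also have "(mat_adjoint (\<rho>1 g) * mat_adjoint (\<rho>1 h)) * \<rho>1 h = mat_adjoint (\<rho>1 g) * (mat_adjoint (\<rho>1 h) * \<rho>1 h)"
      using assoc_mult_mat[OF P Q r] .
    also have "\<dots> = mat_adjoint (\<rho>1 g)" using rep_adj_l[OF grp rep1 h] right_mult_one_mat[OF P] by simp
    also have "\<rho>2 h * \<rho>2 g * X = \<rho>2 h * (\<rho>2 g * X)" using assoc_mult_mat[OF a b X] .
    also have "\<rho>2 h * (\<rho>2 g * X) * mat_adjoint (\<rho>1 g) = \<rho>2 h * (\<rho>2 g * X * mat_adjoint (\<rho>1 g))"
      using assoc_mult_mat[OF a bX P] .
    finally show ?thesis unfolding F_def by simp
  qed
  have "\<rho>2 h * Lm G n2 n1 \<rho>2 \<rho>1 X = msum2 n2 n1 (carrier G) (\<lambda>g. \<rho>2 h * F g)"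
    unfolding Lm_def F_def[symmetric] by (rule msum2_left[OF c2[OF h] Fc])
  also have "\<dots> = msum2 n2 n1 (carrier G) (\<lambda>g. F (h \<otimes>\<^bsub>G\<^esub> g) * \<rho>1 h)"
    unfolding msum2_def using pw by (auto intro!: sum.cong)
  also have "\<dots> = msum2 n2 n1 (carrier G) (\<lambda>g. F g * \<rho>1 h)"
    by (rule msum2_reindex[OF grp h, where H="\<lambda>g. F g * \<rho>1 h"])
  also have "\<dots> = Lm G n2 n1 \<rho>2 \<rho>1 X * \<rho>1 h"
    unfolding Lm_def F_def[symmetric] by (rule msum2_right[OF c1[OF h] Fc, symmetric])
  finally show ?thesis .
qed

lemma Lm_carrier: "Lm G n2 n1 \<rho>2 \<rho>1 X \<in> carrier_mat n2 n1" unfolding Lm_def by simp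

lemma Lm_trace:
  assumes grp: "group G" and rep: "unitary_rep G n \<rho>" and X: "X \<in> carrier_mat n n"
  shows "mtrace (Lm G n n \<rho> \<rho> X) = of_nat (card (carrier G)) * mtrace X"
proof -
  note c = rep_carrier[OF grp rep]
  have "mtrace (Lm G n n \<rho> \<rho> X) = (\<Sum>g\<in>carrier G. mtrace (\<rho> g * X * mat_adjoint (\<rho> g)))"
    unfolding Lm_def using c X by (intro mtrace_msum2) (meson mult_carrier_mat adj_carrier)
  also have "\<dots> = (\<Sum>g\<in>carrier G. mtrace X)"
  proof (rule sum.cong)
    fix g assume g: "g \<in> carrier G"
    have r: "\<rho> g \<in> carrier_mat n n" and P: "mat_adjoint (\<rho> g) \<in> carrier_mat n n" using c[OF g] by auto
    have rX: "\<rho> g * X \<in> carrier_mat n n" using r X by (meson mult_carrier_mat)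
    have "mtrace (\<rho> g * X * mat_adjoint (\<rho> g)) = mtrace (mat_adjoint (\<rho> g) * (\<rho> g * X))"
      by (rule mtrace_comm[OF rX P])
    also have "mat_adjoint (\<rho> g) * (\<rho> g * X) = (mat_adjoint (\<rho> g) * \<rho> g) * X"
      using assoc_mult_mat[OF P r X] by simp
    also have "\<dots> = X" using rep_adj_l[OF grp rep g] X by simp
    finally show "mtrace (\<rho> g * X * mat_adjoint (\<rho> g)) = mtrace X" .
  qed simp
  finally show ?thesis by simp
qed

lemma unitE_entry:
  assumes A: "(A::complex mat) \<in> carrier_mat m m'" and B: "B \<in> carrier_mat n' n"
    and b: "b < m'" and k: "k < n'" and a: "a < m" and l: "l < n"
  shows "(A * mat m' n' (\<lambda>(x,y). if x = b \<and> y = k then 1 else 0) * B) $$ (a,l) = A $$ (a,b) * B $$ (k,l)"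
proof -
  let ?E = "mat m' n' (\<lambda>(x,y). if x = b \<and> y = k then 1 else (0::complex))"
  have AE: "(A * ?E) $$ (a,y) = (if y = k then A $$ (a,b) else 0)" if y: "y < n'" for y
    using A a y b by (auto simp: scalar_prod_def if_distrib[of "\<lambda>x. _ * x"] sum.delta cong: if_cong)
  have "(A * ?E * B) $$ (a,l) = (\<Sum>y<n'. (A * ?E) $$ (a,y) * B $$ (y,l))"
    using A B a l by (auto simp: scalar_prod_def intro!: sum.cong)
  also have "\<dots> = (\<Sum>y<n'. (if y = k then A $$ (a,b) else 0) * B $$ (y,l))"
    using AE by (auto intro!: sum.cong)
  also have "\<dots> = A $$ (a,b) * B $$ (k,l)"
    using k by (simp add: if_distrib[of "\<lambda>x. x * _"] sum.delta cong: if_cong)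
  finally show ?thesis .
qed


lemma orth_entry:
  assumes grp: "group G" and CI: "complete_irreps G R d \<rho>" and i: "i \<in> R" and j: "j \<in> R"
    and a: "a < d j" and b: "b < d j" and l: "l < d i" and k: "k < d i"
  shows "(\<Sum>g\<in>carrier G. \<rho> j g $$ (a,b) * cnj (\<rho> i g $$ (l,k)))
     = (if i = j \<and> a = l \<and> b = k then of_nat (card (carrier G)) / of_nat (d j) else 0)"
proof -
  have irri: "irreducible_unitary_rep G (d i) (\<rho> i)" and irrj: "irreducible_unitary_rep G (d j) (\<rho> j)"
    using CI i j unfolding complete_irreps_def by auto
  then have repi: "unitary_rep G (d i) (\<rho> i)" and repj: "unitary_rep G (d j) (\<rho> j)" and dpos: "d j > 0"
    unfolding irreducible_unitary_rep_def by auto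
  define E where "E = mat (d j) (d i) (\<lambda>(x,y). if x = b \<and> y = k then 1 else (0::complex))"
  have Ec: "E \<in> carrier_mat (d j) (d i)" unfolding E_def by simp
  have "(\<Sum>g\<in>carrier G. \<rho> j g $$ (a,b) * cnj (\<rho> i g $$ (l,k)))
      = (\<Sum>g\<in>carrier G. (\<rho> j g * E * mat_adjoint (\<rho> i g)) $$ (a,l))"
  proof (rule sum.cong)
    fix g assume g: "g \<in> carrier G"
    have ci: "\<rho> i g \<in> carrier_mat (d i) (d i)" and cj: "\<rho> j g \<in> carrier_mat (d j) (d j)"
      using rep_carrier[OF grp repi g] rep_carrier[OF grp repj g] .
    show "\<rho> j g $$ (a,b) * cnj (\<rho> i g $$ (l,k)) = (\<rho> j g * E * mat_adjoint (\<rho> i g)) $$ (a,l)"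
      unfolding E_def using unitE_entry[OF cj adj_carrier[OF ci] b k a l] ci k l by simp
  qed simp
  also have "\<dots> = Lm G (d j) (d i) (\<rho> j) (\<rho> i) E $$ (a,l)"
    unfolding Lm_def using a l by simp
  finally have eq: "(\<Sum>g\<in>carrier G. \<rho> j g $$ (a,b) * cnj (\<rho> i g $$ (l,k))) = Lm G (d j) (d i) (\<rho> j) (\<rho> i) E $$ (a,l)" .
  have intw: "\<forall>h\<in>carrier G. \<rho> j h * Lm G (d j) (d i) (\<rho> j) (\<rho> i) E = Lm G (d j) (d i) (\<rho> j) (\<rho> i) E * \<rho> i h"
    using Lm_intw[OF grp repi repj Ec] by blast
  show ?thesis
  proof (cases "i = j")
    case False
    have "\<not> equivalent_reps G (d i) (\<rho> i) (d j) (\<rho> j)" using CI i j False unfolding complete_irreps_def by auto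
    then have "Lm G (d j) (d i) (\<rho> j) (\<rho> i) E = 0\<^sub>m (d j) (d i)"
      using schur_zero[OF grp irri irrj _ Lm_carrier intw] by blast
    then show ?thesis using eq False a l by simp
  next
    case True
    then have "\<exists>c. Lm G (d j) (d i) (\<rho> j) (\<rho> i) E = c \<cdot>\<^sub>m 1\<^sub>m (d j)"
      using schur_scalar[OF grp irrj Lm_carrier] intw by simp
    then obtain c where c: "Lm G (d j) (d i) (\<rho> j) (\<rho> i) E = c \<cdot>\<^sub>m 1\<^sub>m (d j)" by blast
    have Ec': "E \<in> carrier_mat (d j) (d j)" using Ec True by simp
    have trE: "mtrace E = (if b = k then 1 else 0)"
      unfolding E_def mtrace_def using True b by (simp add: sum.delta cong: if_cong)
    have "mtrace (Lm G (d j) (d j) (\<rho> j) (\<rho> j) E) = of_nat (card (carrier G)) * mtrace E"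
      by (rule Lm_trace[OF grp repj Ec'])
    then have "c * of_nat (d j) = of_nat (card (carrier G)) * mtrace E"
      using c True by (simp add: mtrace_smult[of _ "d j"] mtrace_one)
    then have cv: "c = of_nat (card (carrier G)) * mtrace E / of_nat (d j)"
      using dpos by (simp add: field_simps)
    show ?thesis using eq c cv trE True a l by auto
  qed
qed


lemma mtrace_adj_expand:
  assumes "A \<in> carrier_mat n n" "N \<in> carrier_mat n n"
  shows "mtrace (mat_adjoint A * N) = (\<Sum>k<n. \<Sum>l<n. cnj (A $$ (l,k)) * N $$ (l,k))"
  unfolding mtrace_def using assms by (auto simp: scalar_prod_def intro!: sum.cong)

lemma fourier_inj:
  assumes grp: "group G" and fin: "finite (carrier G)" and CI: "complete_irreps G R d \<rho>"
    and finR: "finite R" and N: "\<forall>i\<in>R. N i \<in> carrier_mat (d i) (d i)"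
    and Z: "\<forall>g\<in>carrier G. (\<Sum>i\<in>R. mtrace (mat_adjoint (\<rho> i g) * N i)) = 0"
    and j: "j \<in> R"
  shows "N j = 0\<^sub>m (d j) (d j)"
proof (rule eq_matI)
  have rep: "\<And>i. i \<in> R \<Longrightarrow> unitary_rep G (d i) (\<rho> i)" and dpos: "d j > 0"
    using CI j unfolding complete_irreps_def irreducible_unitary_rep_def by auto
  have Gne: "carrier G \<noteq> {}" using grp group.is_monoid monoid.one_closed by blast
  then have Gpos: "card (carrier G) > 0" using fin by (simp add: card_gt_0_iff)
  fix a b assume ab: "a < dim_row (0\<^sub>m (d j) (d j) :: complex mat)" "b < dim_col (0\<^sub>m (d j) (d j) :: complex mat)"
  then have a: "a < d j" and b: "b < d j" by auto
  define C where "C = (of_nat (card (carrier G)) / of_nat (d j) :: complex)"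
  have "0 = (\<Sum>g\<in>carrier G. \<rho> j g $$ (a,b) * (\<Sum>i\<in>R. mtrace (mat_adjoint (\<rho> i g) * N i)))"
    using Z by simp
  also have "\<dots> = (\<Sum>g\<in>carrier G. \<Sum>i\<in>R. \<Sum>k<d i. \<Sum>l<d i. N i $$ (l,k) * (\<rho> j g $$ (a,b) * cnj (\<rho> i g $$ (l,k))))"
  proof (rule sum.cong[OF refl])
    fix g assume g: "g \<in> carrier G"
    have "(\<Sum>i\<in>R. mtrace (mat_adjoint (\<rho> i g) * N i)) = (\<Sum>i\<in>R. \<Sum>k<d i. \<Sum>l<d i. cnj (\<rho> i g $$ (l,k)) * N i $$ (l,k))"
      using mtrace_adj_expand[OF rep_carrier[OF grp rep g]] N by (auto intro!: sum.cong)
    then show "\<rho> j g $$ (a,b) * (\<Sum>i\<in>R. mtrace (mat_adjoint (\<rho> i g) * N i))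
      = (\<Sum>i\<in>R. \<Sum>k<d i. \<Sum>l<d i. N i $$ (l,k) * (\<rho> j g $$ (a,b) * cnj (\<rho> i g $$ (l,k))))"
      by (simp add: sum_distrib_left mult.commute mult.left_commute)
  qed
  also have "\<dots> = (\<Sum>i\<in>R. \<Sum>k<d i. \<Sum>l<d i. N i $$ (l,k) * (\<Sum>g\<in>carrier G. \<rho> j g $$ (a,b) * cnj (\<rho> i g $$ (l,k))))"
    by (simp add: sum_distrib_left sum.swap[of _ "carrier G"])
  also have "\<dots> = (\<Sum>i\<in>R. \<Sum>k<d i. \<Sum>l<d i. N i $$ (l,k) * (if i = j \<and> a = l \<and> b = k then C else 0))"
    unfolding C_def using orth_entry[OF grp CI _ j a b] by (auto intro!: sum.cong)
  also have "\<dots> = (\<Sum>i\<in>R. if i = j then N j $$ (a,b) * C else 0)"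
  proof (rule sum.cong[OF refl])
    fix i assume i: "i \<in> R"
    show "(\<Sum>k<d i. \<Sum>l<d i. N i $$ (l,k) * (if i = j \<and> a = l \<and> b = k then C else 0)) = (if i = j then N j $$ (a,b) * C else 0)"
    proof (cases "i = j")
      case True
      have "(\<Sum>k<d j. \<Sum>l<d j. N j $$ (l,k) * (if j = j \<and> a = l \<and> b = k then C else 0))
          = (\<Sum>k<d j. if b = k then N j $$ (a,k) * C else 0)"
      proof (intro sum.cong[OF refl])
        fix k assume "k \<in> {..<d j}"
        show "(\<Sum>l<d j. N j $$ (l,k) * (if j = j \<and> a = l \<and> b = k then C else 0)) = (if b = k then N j $$ (a,k) * C else 0)"
          using a by (cases "b = k") (simp_all add: if_distrib[of "\<lambda>x. _ * x"] sum.delta' cong: if_cong)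
      qed
      also have "\<dots> = N j $$ (a,b) * C" using b by simp
      finally show ?thesis unfolding True by simp
    qed simp
  qed
  also have "\<dots> = N j $$ (a,b) * C" using finR j by simp
  finally have "N j $$ (a,b) * C = 0" by simp
  moreover have "C \<noteq> 0" unfolding C_def using Gpos dpos by simp
  ultimately show "N j $$ (a,b) = 0\<^sub>m (d j) (d j) $$ (a,b)" using a b by simp
qed (use N j in auto)


lemma minus_eq_zero_iff: "(X::complex mat) \<in> carrier_mat m n \<Longrightarrow> Y \<in> carrier_mat m n \<Longrightarrow>
   (X - Y = 0\<^sub>m m n) = (X = Y)"
proof
  assume X: "X \<in> carrier_mat m n" and Y: "Y \<in> carrier_mat m n" and e: "X - Y = 0\<^sub>m m n"
  show "X = Y"
  proof (rule eq_matI)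
    fix i j assume "i < dim_row Y" "j < dim_col Y"
    then have "(X - Y) $$ (i,j) = 0\<^sub>m m n $$ (i,j)" using e by simp
    then show "X $$ (i,j) = Y $$ (i,j)" using X Y \<open>i < dim_row Y\<close> \<open>j < dim_col Y\<close> by auto
  qed (use X Y in auto)
next
  assume "X \<in> carrier_mat m n" "Y \<in> carrier_mat m n" "X = Y"
  then show "X - Y = 0\<^sub>m m n" by (intro eq_matI) auto
qed

lemma smult_eq_zero_iff: "(c::complex) \<noteq> 0 \<Longrightarrow> M \<in> carrier_mat m n \<Longrightarrow> (c \<cdot>\<^sub>m M = 0\<^sub>m m n) = (M = 0\<^sub>m m n)"
  by (metis inv_smult_cancel smult_zero_mat)

theorem mainTheorem8:
  fixes G :: "('g, 'b) monoid_scheme"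
    and S :: "'s set" and f :: "'s \<Rightarrow> 'g" and s :: 's
    and R :: "'i set" and d :: "'i \<Rightarrow> nat" and \<rho> :: "'i \<Rightarrow> 'g \<Rightarrow> complex mat"
    and P :: "'i \<Rightarrow> complex mat" and c :: "'i \<Rightarrow> complex"
    and \<phi> :: "'g \<Rightarrow> complex" and \<psi> :: "'s \<times> 'g \<Rightarrow> complex"
  assumes "group G" and "finite (carrier G)"
    and "finite S" and "\<forall>t\<in>S. f t \<in> carrier G"
    and "complete_irreps G R d \<rho>" and "finite R"
    and "\<forall>i\<in>R. orth_projector (d i) (P i)"
    and "\<forall>i\<in>R. c i \<noteq> 0"
    and "\<phi> = (\<lambda>h. \<Sum>i\<in>R. c i * rep_dagger G (\<rho> i) (P i) h)"
    and "\<psi> = diffusion_tensor_id S (U_f G S f (uS_tensor S \<phi>))"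
    and "s \<in> S"
  shows "(\<forall>g\<in>carrier G. \<psi> (s, g) = 0) \<longleftrightarrow>
         (\<forall>i\<in>R. \<rho> i (f s) * P i = (2 / of_nat (card S)) \<cdot>\<^sub>m msum (d i) S (\<lambda>t. \<rho> i (f t) * P i))"
proof -
  note grp = assms(1) and fin = assms(2) and finS = assms(3) and fS = assms(4) and CI = assms(5)
    and finR = assms(6) and Pp = assms(7) and cnz = assms(8) and phi = assms(9) and psi = assms(10)
    and sS = assms(11)
  interpret group G by (rule grp)
  have rep: "\<And>i. i \<in> R \<Longrightarrow> unitary_rep G (d i) (\<rho> i)"
    using CI unfolding complete_irreps_def irreducible_unitary_rep_def by auto
  have Pc: "\<And>i. i \<in> R \<Longrightarrow> P i \<in> carrier_mat (d i) (d i)" using Pp unfolding orth_projector_def by auto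
  have rc: "\<And>i g. i \<in> R \<Longrightarrow> g \<in> carrier G \<Longrightarrow> \<rho> i g \<in> carrier_mat (d i) (d i)"
    using rep_carrier[OF grp rep] by blast
  define e where "e = (2 / of_nat (card S) :: complex)"
  define k where "k = complex_of_real (1 / sqrt (real (card S)))"
  have cardS: "card S > 0" using finS sS by (auto simp: card_gt_0_iff)
  have k0: "k \<noteq> 0" unfolding k_def using cardS by simp
  define F where "F = (\<lambda>i t. \<rho> i (f t) * P i)"
  have Fc: "\<And>i t. i \<in> R \<Longrightarrow> t \<in> S \<Longrightarrow> F i t \<in> carrier_mat (d i) (d i)"
    unfolding F_def using rc Pc fS by (meson mult_carrier_mat)
  define M where "M = (\<lambda>i. F i s - e \<cdot>\<^sub>m msum (d i) S (F i))"
  have Mc: "\<And>i. i \<in> R \<Longrightarrow> M i \<in> carrier_mat (d i) (d i)"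
    unfolding M_def by (intro minus_carrier_mat smult_carrier_mat) (simp add: msum_eq)
  have key: "\<psi> (s, g) = k * (\<Sum>i\<in>R. mtrace (mat_adjoint (\<rho> i g) * (c i \<cdot>\<^sub>m M i)))"
    if g: "g \<in> carrier G" for g
  proof -
    define T where "T = (\<lambda>i t. mtrace (mat_adjoint (\<rho> i g) * F i t))"
    have U: "U_f G S f (uS_tensor S \<phi>) (t, g) = k * (\<Sum>i\<in>R. c i * T i t)" if t: "t \<in> S" for t
    proof -
      have ft: "f t \<in> carrier G" using fS t by simp
      have h: "inv\<^bsub>G\<^esub> (f t) \<otimes>\<^bsub>G\<^esub> g \<in> carrier G" using ft g by simp
      have "U_f G S f (uS_tensor S \<phi>) (t, g) = k * \<phi> (inv\<^bsub>G\<^esub> (f t) \<otimes>\<^bsub>G\<^esub> g)"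
        unfolding U_f_def uS_tensor_def k_def using t g by simp
      also have "\<phi> (inv\<^bsub>G\<^esub> (f t) \<otimes>\<^bsub>G\<^esub> g) = (\<Sum>i\<in>R. c i * T i t)"
        unfolding phi rep_dagger_def T_def F_def
      proof (rule sum.cong[OF refl])
        fix i assume i: "i \<in> R"
        have A: "mat_adjoint (\<rho> i g) \<in> carrier_mat (d i) (d i)" using rc[OF i g] by simp
        have "mat_adjoint (\<rho> i (inv\<^bsub>G\<^esub> (f t) \<otimes>\<^bsub>G\<^esub> g)) * P i = mat_adjoint (\<rho> i g) * \<rho> i (f t) * P i"
          using rep_adj_inv_mult[OF grp rep[OF i] ft g] by simp
        also have "\<dots> = mat_adjoint (\<rho> i g) * (\<rho> i (f t) * P i)"
          using assoc_mult_mat[OF A rc[OF i ft] Pc[OF i]] .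
        finally show "c i * (if inv\<^bsub>G\<^esub> (f t) \<otimes>\<^bsub>G\<^esub> g \<in> carrier G then mtrace (mat_adjoint (\<rho> i (inv\<^bsub>G\<^esub> (f t) \<otimes>\<^bsub>G\<^esub> g)) * P i) else 0)
          = c i * mtrace (mat_adjoint (\<rho> i g) * (\<rho> i (f t) * P i))" using h by simp
      qed
      finally show ?thesis .
    qed
    have tr: "mtrace (mat_adjoint (\<rho> i g) * (c i \<cdot>\<^sub>m M i)) = c i * (T i s - e * (\<Sum>t\<in>S. T i t))"
      if i: "i \<in> R" for i
    proof -
      have A: "mat_adjoint (\<rho> i g) \<in> carrier_mat (d i) (d i)" using rc[OF i g] by simp
      have ms: "msum (d i) S (F i) \<in> carrier_mat (d i) (d i)" by (simp add: msum_eq)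
      have ems: "e \<cdot>\<^sub>m msum (d i) S (F i) \<in> carrier_mat (d i) (d i)" using ms by simp
      have AF: "mat_adjoint (\<rho> i g) * F i s \<in> carrier_mat (d i) (d i)" using A Fc[OF i sS] by (meson mult_carrier_mat)
      have Ams: "mat_adjoint (\<rho> i g) * msum (d i) S (F i) \<in> carrier_mat (d i) (d i)" using A ms by (meson mult_carrier_mat)
      have "mtrace (mat_adjoint (\<rho> i g) * (c i \<cdot>\<^sub>m M i)) = c i * mtrace (mat_adjoint (\<rho> i g) * M i)"
        using mult_smult_distrib[OF A Mc[OF i]] mtrace_smult A Mc[OF i] by (metis mult_carrier_mat)
      also have "mat_adjoint (\<rho> i g) * M i = mat_adjoint (\<rho> i g) * F i s - mat_adjoint (\<rho> i g) * (e \<cdot>\<^sub>m msum (d i) S (F i))"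
        unfolding M_def using mult_minus_distrib_mat[OF A Fc[OF i sS] ems] .
      also have "mat_adjoint (\<rho> i g) * (e \<cdot>\<^sub>m msum (d i) S (F i)) = e \<cdot>\<^sub>m (mat_adjoint (\<rho> i g) * msum (d i) S (F i))"
        using mult_smult_distrib[OF A ms] .
      also have "mtrace (mat_adjoint (\<rho> i g) * F i s - e \<cdot>\<^sub>m (mat_adjoint (\<rho> i g) * msum (d i) S (F i)))
          = T i s - e * mtrace (mat_adjoint (\<rho> i g) * msum (d i) S (F i))"
        unfolding T_def using mtrace_minus[OF AF] mtrace_smult[OF Ams] Ams by simp
      also have "mtrace (mat_adjoint (\<rho> i g) * msum (d i) S (F i)) = (\<Sum>t\<in>S. T i t)"
      proof -
        have "mat_adjoint (\<rho> i g) * msum (d i) S (F i) = msum2 (d i) (d i) S (\<lambda>t. mat_adjoint (\<rho> i g) * F i t)"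
          unfolding msum_eq by (rule msum2_left[OF A Fc[OF i]])
        then show ?thesis unfolding T_def using A Fc[OF i]
          by (simp add: mtrace_msum2)
      qed
      finally show ?thesis .
    qed
    have "\<psi> (s, g) = k * (\<Sum>i\<in>R. c i * T i s) - e * (\<Sum>t\<in>S. k * (\<Sum>i\<in>R. c i * T i t))"
      unfolding psi diffusion_tensor_id_def e_def using sS U by simp
    also have "\<dots> = k * (\<Sum>i\<in>R. c i * (T i s - e * (\<Sum>t\<in>S. T i t)))"
      by (simp add: algebra_simps sum_distrib_left sum_subtractf sum.swap[of _ S] sum.distrib)
    also have "\<dots> = k * (\<Sum>i\<in>R. mtrace (mat_adjoint (\<rho> i g) * (c i \<cdot>\<^sub>m M i)))"
      using tr by simp
    finally show ?thesis .
  qed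
  have "(\<forall>g\<in>carrier G. \<psi> (s, g) = 0) \<longleftrightarrow> (\<forall>i\<in>R. c i \<cdot>\<^sub>m M i = 0\<^sub>m (d i) (d i))"
  proof
    assume Z: "\<forall>g\<in>carrier G. \<psi> (s, g) = 0"
    show "\<forall>i\<in>R. c i \<cdot>\<^sub>m M i = 0\<^sub>m (d i) (d i)"
    proof
      fix j assume j: "j \<in> R"
      show "c j \<cdot>\<^sub>m M j = 0\<^sub>m (d j) (d j)"
      proof (rule fourier_inj[OF grp fin CI finR _ _ j])
        show "\<forall>i\<in>R. c i \<cdot>\<^sub>m M i \<in> carrier_mat (d i) (d i)" using Mc by simp
        show "\<forall>g\<in>carrier G. (\<Sum>i\<in>R. mtrace (mat_adjoint (\<rho> i g) * (c i \<cdot>\<^sub>m M i))) = 0"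
          using Z key k0 by simp
      qed
    qed
  next
    assume Z: "\<forall>i\<in>R. c i \<cdot>\<^sub>m M i = 0\<^sub>m (d i) (d i)"
    show "\<forall>g\<in>carrier G. \<psi> (s, g) = 0"
    proof
      fix g assume g: "g \<in> carrier G"
      have "\<forall>i\<in>R. mtrace (mat_adjoint (\<rho> i g) * (c i \<cdot>\<^sub>m M i)) = 0"
      proof
        fix i assume i: "i \<in> R"
        have "mat_adjoint (\<rho> i g) * (c i \<cdot>\<^sub>m M i) = 0\<^sub>m (d i) (d i)"
          using Z i rc[OF i g] by simp
        then show "mtrace (mat_adjoint (\<rho> i g) * (c i \<cdot>\<^sub>m M i)) = 0"
          unfolding mtrace_def by simp
      qed
      then show "\<psi> (s, g) = 0" using key[OF g] by simp
    qed
  qed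
  also have "\<dots> \<longleftrightarrow> (\<forall>i\<in>R. M i = 0\<^sub>m (d i) (d i))"
    using smult_eq_zero_iff cnz Mc by auto
  also have "\<dots> \<longleftrightarrow> (\<forall>i\<in>R. \<rho> i (f s) * P i = (2 / of_nat (card S)) \<cdot>\<^sub>m msum (d i) S (\<lambda>t. \<rho> i (f t) * P i))"
  proof -
    have "M i = 0\<^sub>m (d i) (d i) \<longleftrightarrow> \<rho> i (f s) * P i = (2 / of_nat (card S)) \<cdot>\<^sub>m msum (d i) S (\<lambda>t. \<rho> i (f t) * P i)"
      if i: "i \<in> R" for i
      unfolding M_def using minus_eq_zero_iff[OF Fc[OF i sS], of "e \<cdot>\<^sub>m msum (d i) S (F i)"]
      by (simp add: msum_eq F_def e_def)
    then show ?thesis by auto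
  qed
  finally show ?thesis .
qed

end
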